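(* Let $N,\mu,\beta,\sigma,\gamma,p>0$ and $0<\rho<1$ and consider the system $$S'=\mu N-\tfrac{\beta(1-\rho)}{N}SI-\tfrac{p}{N}S-\mu S,\qquad E'=\tfrac{\beta(1-\rho)}{N}SI-(\sigma+\mu)E,\qquad I'=\sigma E-(\gamma+\mu)I$$ on $\Omega=\{(S,E,I)\in\mathbb{R}_+^3: S+E+I\le N\}$. Then any $\omega$-limit set contained in the interior of $\Omega$ is either a closed orbit or the endemic equilibrium $(S^e,E^e,I^e)$, where $$S^e=\frac{(\sigma+\mu)(\gamma+\mu)N}{\sigma\beta(1-\rho)},\quad I^e=\frac{\mu N\sigma\beta(1-\rho)-(\sigma+\mu)(\gamma+\mu)(p+\mu N)}{(\sigma+\mu)(\gamma+\mu)\beta(1-\rho)},\quad E^e=\frac{\gamma+\mu}{\sigma}I^e.$$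
   Context: The $\omega$-limit set of a solution $x(\cdot)$ is $\{y:\exists t_n\to+\infty,\ x(t_n)\to y\}$. The endemic equilibrium lies in the interior of $\Omega$ exactly when $\mathcal{R}_0=\frac{\mu N\sigma\beta(1-\rho)}{(\sigma+\mu)(\gamma+\mu)(p+\mu N)}>1$. *)

theory Defs
  imports "HOL-Analysis.Analysis"
begin

definition seir_field ::
  "real \<Rightarrow> real \<Rightarrow> real \<Rightarrow> real \<Rightarrow> real \<Rightarrow> real \<Rightarrow> real
   \<Rightarrow> real \<times> real \<times> real \<Rightarrow> real \<times> real \<times> real" where
  "seir_field N \<mu> \<beta> \<sigma> \<gamma> p \<rho> = (\<lambda>(S, E, I).
     (\<mu> * N - \<beta> * (1 - \<rho>) / N * S * I - p / N * S - \<mu> * S,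
      \<beta> * (1 - \<rho>) / N * S * I - (\<sigma> + \<mu>) * E,
      \<sigma> * E - (\<gamma> + \<mu>) * I))"

definition Omega :: "real \<Rightarrow> (real \<times> real \<times> real) set" where
  "Omega N = {(S, E, I). 0 \<le> S \<and> 0 \<le> E \<and> 0 \<le> I \<and> S + E + I \<le> N}"

definition omega_limit :: "(real \<Rightarrow> 'a::topological_space) \<Rightarrow> 'a set" where
  "omega_limit x = {y. \<exists>t :: nat \<Rightarrow> real. filterlim t at_top sequentially \<and>
                          (\<lambda>n. x (t n)) \<longlonglongrightarrow> y}"

definition forward_solution ::
  "('a::real_normed_vector \<Rightarrow> 'a) \<Rightarrow> (real \<Rightarrow> 'a) \<Rightarrow> bool" where
  "forward_solution F x \<longleftrightarrow>
     (\<forall>t\<ge>0. (x has_vector_derivative F (x t)) (at t within {0..}))"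

definition closed_orbit ::
  "('a::real_normed_vector \<Rightarrow> 'a) \<Rightarrow> 'a set \<Rightarrow> bool" where
  "closed_orbit F A \<longleftrightarrow>
     (\<exists>y T. T > 0 \<and> (\<forall>t. (y has_vector_derivative F (y t)) (at t)) \<and>
            (\<forall>t. y (t + T) = y t) \<and> \<not> (\<exists>c. \<forall>t. y t = c) \<and> A = range y)"

end

theory Submission
  imports Defs
begin


lemma mvt0:
  fixes f f' :: "real \<Rightarrow> real"
  assumes "0 \<le> a" "a < b" "\<And>t. 0 \<le> t \<Longrightarrow> (f has_real_derivative f' t) (at t within {0..})"
  shows "\<exists>z. a < z \<and> z < b \<and> f b - f a = (b - a) * f' z"
proof -
  have c: "continuous_on {0..} f"
    unfolding continuous_on_eq_continuous_within
    by (auto intro: DERIV_continuous[OF assms(3)])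
  have d: "(f has_real_derivative f' z) (at z)" if "0 < z" for z
  proof -
    have "z \<in> interior {0..}" using that by simp
    then show ?thesis using assms(3)[of z] that at_within_interior by fastforce
  qed
  obtain l z where z: "a < z" "z < b" "DERIV f z :> l" "f b - f a = (b - a) * l"
    using MVT[OF assms(2), of f] continuous_on_subset[OF c] d assms(1)
    by (smt (verit, ccfv_SIG) atLeastAtMost_iff atLeast_iff real_differentiable_def subsetI)
  have "l = f' z" using DERIV_unique[OF z(3) d] z assms by simp
  then show ?thesis using z by blast
qed

lemma comp_derivs:
  assumes "forward_solution (seir_field N \<mu> \<beta> \<sigma> \<gamma> p \<rho>) x" "0 \<le> t"
  shows "((\<lambda>t. fst (x t)) has_real_derivative
           (\<mu> * N - \<beta> * (1 - \<rho>) / N * fst (x t) * snd (snd (x t)) - p / N * fst (x t) - \<mu> * fst (x t))) (at t within {0..})"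
    and "((\<lambda>t. fst (snd (x t))) has_real_derivative
           (\<beta> * (1 - \<rho>) / N * fst (x t) * snd (snd (x t)) - (\<sigma> + \<mu>) * fst (snd (x t)))) (at t within {0..})"
    and "((\<lambda>t. snd (snd (x t))) has_real_derivative
           (\<sigma> * fst (snd (x t)) - (\<gamma> + \<mu>) * snd (snd (x t)))) (at t within {0..})"
proof -
  have h: "(x has_derivative (\<lambda>h. h *\<^sub>R seir_field N \<mu> \<beta> \<sigma> \<gamma> p \<rho> (x t))) (at t within {0..})"
    using assms unfolding forward_solution_def has_vector_derivative_def by auto
  obtain S E I where x: "x t = (S, E, I)" by (metis prod_cases3)
  have F: "seir_field N \<mu> \<beta> \<sigma> \<gamma> p \<rho> (x t) =
     (\<mu> * N - \<beta> * (1 - \<rho>) / N * S * I - p / N * S - \<mu> * S,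
      \<beta> * (1 - \<rho>) / N * S * I - (\<sigma> + \<mu>) * E,
      \<sigma> * E - (\<gamma> + \<mu>) * I)" using x by (simp add: seir_field_def)
  note h1 = has_derivative_fst[OF h]
  note h2 = has_derivative_fst[OF has_derivative_snd[OF h]]
  note h3 = has_derivative_snd[OF has_derivative_snd[OF h]]
  show "((\<lambda>t. fst (x t)) has_real_derivative
           (\<mu> * N - \<beta> * (1 - \<rho>) / N * fst (x t) * snd (snd (x t)) - p / N * fst (x t) - \<mu> * fst (x t))) (at t within {0..})"
    using h1 unfolding has_field_derivative_def by (rule has_derivative_eq_rhs) (auto simp: x seir_field_def fun_eq_iff algebra_simps)
  show "((\<lambda>t. fst (snd (x t))) has_real_derivative
           (\<beta> * (1 - \<rho>) / N * fst (x t) * snd (snd (x t)) - (\<sigma> + \<mu>) * fst (snd (x t)))) (at t within {0..})"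
    using h2 unfolding has_field_derivative_def by (rule has_derivative_eq_rhs) (auto simp: x seir_field_def fun_eq_iff algebra_simps)
  show "((\<lambda>t. snd (snd (x t))) has_real_derivative
           (\<sigma> * fst (snd (x t)) - (\<gamma> + \<mu>) * snd (snd (x t)))) (at t within {0..})"
    using h3 unfolding has_field_derivative_def by (rule has_derivative_eq_rhs) (auto simp: x seir_field_def fun_eq_iff algebra_simps)
qed



lemma cont_induct:
  fixes f :: "real \<Rightarrow> real"
  assumes cont: "continuous_on {0..} f" and f0: "f 0 \<ge> 0"
    and step: "\<And>t0. 0 \<le> t0 \<Longrightarrow> (\<forall>s\<in>{0..t0}. f s \<ge> 0) \<Longrightarrow> \<exists>d>0. \<forall>s\<in>{t0..t0+d}. f s \<ge> 0"
    and t: "0 \<le> t"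
  shows "f t \<ge> 0"
proof (rule ccontr)
  assume neg: "\<not> f t \<ge> 0"
  define A where "A = {u. 0 \<le> u \<and> u \<le> t \<and> (\<forall>s\<in>{0..u}. f s \<ge> 0)}"
  have A0: "0 \<in> A" using f0 t by (auto simp: A_def)
  have bdd: "bdd_above A" by (auto simp: A_def bdd_above_def)
  define t0 where "t0 = Sup A"
  have t0ge: "0 \<le> t0" using cSup_upper[OF A0 bdd] by (simp add: t0_def)
  have t0le: "t0 \<le> t" unfolding t0_def using A0 by (intro cSup_least) (auto simp: A_def)
  have below: "\<forall>s\<in>{0..<t0}. f s \<ge> 0"
  proof
    fix s assume s: "s \<in> {0..<t0}"
    then obtain u where "u \<in> A" "s < u" using less_cSupD[of A s] A0 by (auto simp: t0_def)
    then show "f s \<ge> 0" using s by (auto simp: A_def)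
  qed
  have closedB: "closed {s \<in> {0..}. 0 \<le> f s}"
    using continuous_on_closed_Collect_le[OF continuous_on_const cont closed_atLeast] .
  have all: "\<forall>s\<in>{0..t0}. f s \<ge> 0"
  proof (cases "t0 = 0")
    case True then show ?thesis using f0 by auto
  next
    case False
    have "{0..<t0} \<subseteq> {s \<in> {0..}. 0 \<le> f s}" using below by auto
    then have "closure {0..<t0} \<subseteq> {s \<in> {0..}. 0 \<le> f s}"
      using closure_minimal closedB by blast
    then show ?thesis using False t0ge by auto
  qed
  have "t0 \<noteq> t" using all neg t0ge by auto
  then have lt: "t0 < t" using t0le by simp
  obtain d where d: "d > 0" "\<forall>s\<in>{t0..t0+d}. f s \<ge> 0" using step[OF t0ge all] by blast
  define u where "u = min (t0 + d) t"
  have "u \<in> A" unfolding A_def u_def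
  proof (intro CollectI conjI ballI)
    fix s assume "s \<in> {0..min (t0 + d) t}"
    then show "f s \<ge> 0" using all d by (cases "s \<le> t0") auto
  qed (use t0ge d t in auto)
  then have "u \<le> t0" using cSup_upper[OF _ bdd] by (simp add: t0_def)
  then show False using lt d by (simp add: u_def)
qed



lemma local_nonneg:
  fixes f :: "real \<Rightarrow> real"
  assumes der: "(f has_real_derivative D) (at t0 within {0..})" and t0: "0 \<le> t0"
    and f0: "f t0 \<ge> 0" and D: "f t0 = 0 \<Longrightarrow> D > 0"
  shows "\<exists>d>0. \<forall>s\<in>{t0..t0+d}. f s \<ge> 0"
proof (cases "f t0 = 0")
  case True
  obtain d where d: "d > 0" "\<forall>h>0. t0 + h \<in> {0..} \<longrightarrow> h < d \<longrightarrow> f t0 < f (t0 + h)"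
    using has_real_derivative_pos_inc_right[OF der D[OF True]] by blast
  show ?thesis
  proof (intro exI[of _ "d/2"] conjI ballI)
    fix s assume s: "s \<in> {t0..t0 + d/2}"
    show "f s \<ge> 0"
    proof (cases "s = t0")
      case False
      then have "f t0 < f (t0 + (s - t0))" using d(2)[rule_format, of "s - t0"] d(1) s t0 by auto
      then show ?thesis using True by simp
    qed (use f0 in auto)
  qed (use d in auto)
next
  case False
  then have pos: "f t0 > 0" using f0 by simp
  have "continuous (at t0 within {0..}) f" using DERIV_continuous[OF der] .
  then have "(f \<longlongrightarrow> f t0) (at t0 within {0..})" by (simp add: continuous_within)
  then have "eventually (\<lambda>s. f s > 0) (at t0 within {0..})" using order_tendstoD(1)[OF _ pos] by blast
  then obtain d where d: "d > 0" "\<forall>s\<in>{0..}. s \<noteq> t0 \<and> dist s t0 < d \<longrightarrow> f s > 0"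
    unfolding eventually_at by blast
  show ?thesis
  proof (intro exI[of _ "d/2"] conjI ballI)
    fix s assume s: "s \<in> {t0..t0 + d/2}"
    show "f s \<ge> 0"
    proof (cases "s = t0")
      case False
      then show ?thesis using d s t0 by (auto simp: dist_real_def intro: less_imp_le)
    qed (use f0 in auto)
  qed (use d in auto)
qed

locale seir =
  fixes S E I :: "real \<Rightarrow> real" and \<Lambda> k \<delta> c d \<sigma> \<mu> N :: real
  assumes pos: "\<Lambda> > 0" "k > 0" "\<delta> > 0" "c > 0" "d > 0" "\<sigma> > 0" "\<mu> > 0" "N > 0"
    and rel: "c = \<sigma> + \<mu>" "\<delta> \<ge> \<mu>" "d \<ge> \<mu>" "\<Lambda> = \<mu> * N"
    and dS: "\<And>t. 0 \<le> t \<Longrightarrow> (S has_real_derivative (\<Lambda> - k * S t * I t - \<delta> * S t)) (at t within {0..})"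
    and dE: "\<And>t. 0 \<le> t \<Longrightarrow> (E has_real_derivative (k * S t * I t - c * E t)) (at t within {0..})"
    and dI: "\<And>t. 0 \<le> t \<Longrightarrow> (I has_real_derivative (\<sigma> * E t - d * I t)) (at t within {0..})"
    and init: "S 0 \<ge> 0" "E 0 \<ge> 0" "I 0 \<ge> 0" "S 0 + E 0 + I 0 \<le> N"
begin

lemma contS: "continuous_on {0..} S"
  unfolding continuous_on_eq_continuous_within by (auto intro: DERIV_continuous[OF dS])
lemma contE: "continuous_on {0..} E"
  unfolding continuous_on_eq_continuous_within by (auto intro: DERIV_continuous[OF dE])
lemma contI: "continuous_on {0..} I"
  unfolding continuous_on_eq_continuous_within by (auto intro: DERIV_continuous[OF dI])

lemma at_pos: "0 < (t::real) \<Longrightarrow> at t within {0..} = at t"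
  by (rule at_within_interior) simp

lemma S_nonneg: "0 \<le> t \<Longrightarrow> S t \<ge> 0"
proof (rule cont_induct[OF contS init(1)])
  fix t0 :: real assume t0: "0 \<le> t0" "\<forall>s\<in>{0..t0}. S s \<ge> 0"
  show "\<exists>d>0. \<forall>s\<in>{t0..t0+d}. S s \<ge> 0"
    by (rule local_nonneg[OF dS[OF t0(1)] t0(1)]) (use t0 pos in auto)
qed

lemma EI_nonneg: "0 \<le> t \<Longrightarrow> min (E t) (I t) \<ge> 0"
proof (rule cont_induct[where f = "\<lambda>t. min (E t) (I t)"])
  show "continuous_on {0..} (\<lambda>t. min (E t) (I t))" by (intro continuous_on_min contE contI)
  show "min (E 0) (I 0) \<ge> 0" using init by simp
  fix t0 :: real assume t0: "0 \<le> t0" "\<forall>s\<in>{0..t0}. min (E s) (I s) \<ge> 0"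
  define u where "u = (\<lambda>t. E t * exp (c*t))"
  define v where "v = (\<lambda>t. I t * exp (d*t))"
  have du: "(u has_real_derivative (k * S t * I t * exp (c*t))) (at t within {0..})" if "0 \<le> t" for t
  proof -
    have e: "((\<lambda>t. exp (c*t)) has_real_derivative exp (c*t) * c) (at t within {0..})"
      by (auto intro!: derivative_eq_intros)
    show ?thesis unfolding u_def
      by (rule DERIV_cong[OF DERIV_mult[OF dE[OF that] e]]) (simp add: algebra_simps)
  qed
  have dv: "(v has_real_derivative (\<sigma> * E t * exp (d*t))) (at t within {0..})" if "0 \<le> t" for t
  proof -
    have e: "((\<lambda>t. exp (d*t)) has_real_derivative exp (d*t) * d) (at t within {0..})"
      by (auto intro!: derivative_eq_intros)
    show ?thesis unfolding v_def
      by (rule DERIV_cong[OF DERIV_mult[OF dI[OF that] e]]) (simp add: algebra_simps)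
  qed
  have cu: "continuous_on {0..} u" unfolding continuous_on_eq_continuous_within
    by (auto intro: DERIV_continuous[OF du])
  have cv: "continuous_on {0..} v" unfolding continuous_on_eq_continuous_within
    by (auto intro: DERIV_continuous[OF dv])
  obtain sB where "sB \<in> {0..t0+1}" "\<forall>y\<in>{0..t0+1}. S y \<le> S sB"
  proof -
    have "continuous_on {0..t0+1} S" by (rule continuous_on_subset[OF contS]) auto
    moreover have "{0..t0+1} \<noteq> {}" using t0 by auto
    ultimately show ?thesis using continuous_attains_sup[OF compact_Icc] that by blast
  qed
  then obtain B where B: "\<And>y. y \<in> {0..t0+1} \<Longrightarrow> S y \<le> B" by blast
  define X where "X = exp (\<bar>c - d\<bar> * (t0+1))"
  have X: "exp ((c - d) * z) \<le> X" "exp ((d - c) * z) \<le> X" if "z \<in> {0..t0+1}" for z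
  proof -
    have z0: "0 \<le> z" "z \<le> t0 + 1" using that by auto
    have "(c - d) * z \<le> \<bar>c - d\<bar> * z" using z0 by (intro mult_right_mono) auto
    also have "\<dots> \<le> \<bar>c - d\<bar> * (t0+1)" using z0 by (intro mult_left_mono) auto
    finally have a1: "(c - d) * z \<le> \<bar>c - d\<bar> * (t0+1)" .
    have "(d - c) * z \<le> \<bar>c - d\<bar> * z" using z0 by (intro mult_right_mono) auto
    also have "\<dots> \<le> \<bar>c - d\<bar> * (t0+1)" using z0 by (intro mult_left_mono) auto
    finally have a2: "(d - c) * z \<le> \<bar>c - d\<bar> * (t0+1)" .
    note a1 a2
    then show "exp ((c - d) * z) \<le> X" "exp ((d - c) * z) \<le> X" unfolding X_def by auto
  qed
  define L where "L = 1 + k * \<bar>B\<bar> * X + \<sigma> * X"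
  have Xpos: "X > 0" unfolding X_def by simp
  have Lpos: "L > 0" unfolding L_def using pos Xpos by (simp add: add_pos_nonneg)
  have alpha: "0 \<le> k * S z * exp ((c - d) * z) \<and> k * S z * exp ((c - d) * z) \<le> L" if "z \<in> {0..t0+1}" for z
  proof
    show "0 \<le> k * S z * exp ((c - d) * z)" using S_nonneg[of z] that pos by simp
    have s1: "S z * exp ((c-d)*z) \<le> \<bar>B\<bar> * X"
      by (rule mult_mono) (use B[OF that] X(1)[OF that] S_nonneg[of z] that in auto)
    have "k * S z * exp ((c - d) * z) \<le> k * \<bar>B\<bar> * X"
      using mult_left_mono[OF s1, of k] pos by (simp add: mult.assoc)
    then show "k * S z * exp ((c - d) * z) \<le> L" unfolding L_def using mult_pos_pos[OF pos(6) Xpos] by linarith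
  qed
  have beta: "0 \<le> \<sigma> * exp ((d - c) * z) \<and> \<sigma> * exp ((d - c) * z) \<le> L" if "z \<in> {0..t0+1}" for z
  proof
    show "0 \<le> \<sigma> * exp ((d - c) * z)" using pos by simp
    have "\<sigma> * exp ((d - c) * z) \<le> \<sigma> * X" using X(2)[OF that] pos by simp
    moreover have "0 \<le> k * \<bar>B\<bar> * X" using pos Xpos by simp
    ultimately show "\<sigma> * exp ((d - c) * z) \<le> L" unfolding L_def by linarith
  qed
  define h where "h = min 1 (1 / (2 * L))"
  have hpos: "h > 0" unfolding h_def using Lpos by simp
  have hL: "h * L \<le> 1/2" unfolding h_def using Lpos
    by (cases "1 \<le> 1 / (2 * L)") (auto simp: field_simps min_def)
  show "\<exists>d>0. \<forall>s\<in>{t0..t0+d}. min (E s) (I s) \<ge> 0"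
  proof (rule exI[of _ h], rule conjI[OF hpos], rule ccontr)
    assume "\<not> (\<forall>s\<in>{t0..t0+h}. min (E s) (I s) \<ge> 0)"
    then obtain s1 where s1: "s1 \<in> {t0..t0+h}" "E s1 < 0 \<or> I s1 < 0" by auto
    define g where "g = (\<lambda>s. max (- u s) (- v s))"
    have J: "{t0..t0+h} \<subseteq> {0..}" using t0 by auto
    have cg: "continuous_on {t0..t0+h} g" unfolding g_def
      by (intro continuous_on_max continuous_on_minus continuous_on_subset[OF cu J] continuous_on_subset[OF cv J])
    obtain s where s: "s \<in> {t0..t0+h}" "\<forall>y\<in>{t0..t0+h}. g y \<le> g s"
    proof -
      have "{t0..t0+h} \<noteq> {}" using s1 by auto
      then show ?thesis using continuous_attains_sup[OF compact_Icc _ cg] that by blast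
    qed
    define m where "m = g s"
    have "E s1 * exp (c * s1) < 0 \<or> I s1 * exp (d * s1) < 0" using s1(2) by (auto simp: mult_less_0_iff)
    then have "g s1 > 0" unfolding g_def u_def v_def by auto
    moreover have "g s1 \<le> g s" using s(2) s1(1) by blast
    ultimately have mpos: "m > 0" unfolding m_def by linarith
    have "g t0 \<le> 0" using t0 unfolding g_def u_def v_def by auto
    then have "s \<noteq> t0" using mpos unfolding m_def by auto
    then have st0: "t0 < s" using s(1) by auto
    have sh: "s - t0 \<le> h" using s by auto
    have bnd: "- m \<le> u z \<and> - m \<le> v z" if "z \<in> {t0..s}" for z
    proof -
      have "g z \<le> m" using s that unfolding m_def by auto
      then show ?thesis unfolding g_def by auto
    qed
    have zin: "z \<in> {0..t0+1}" if "z \<in> {t0..s}" for z using that s t0 hpos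
      unfolding h_def by auto
    show False
    proof (cases "- u s \<ge> - v s")
      case True
      then have us: "u s = - m" unfolding m_def g_def by auto
      obtain z where z: "t0 < z" "z < s" "u s - u t0 = (s - t0) * (k * S z * I z * exp (c*z))"
        using mvt0[OF t0(1) st0 du] by blast
      have zz: "z \<in> {t0..s}" using z by auto
      have eq: "k * S z * I z * exp (c*z) = (k * S z * exp ((c - d) * z)) * v z"
      proof -
        have "exp ((c - d) * z) * exp (d * z) = exp (c * z)" by (simp add: exp_add[symmetric] algebra_simps)
        then show ?thesis unfolding v_def by (metis mult.assoc mult.commute)
      qed
      have "(k * S z * exp ((c - d) * z)) * v z \<ge> (k * S z * exp ((c - d) * z)) * (- m)"
        using alpha[OF zin[OF zz]] bnd[OF zz] by (intro mult_left_mono) auto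
      moreover have "(k * S z * exp ((c - d) * z)) * (- m) \<ge> - (L * m)"
        using alpha[OF zin[OF zz]] mpos by (simp add: mult_right_mono)
      ultimately have der: "k * S z * I z * exp (c*z) \<ge> - (L * m)" using eq by linarith
      have "u t0 \<ge> 0" using t0 unfolding u_def by auto
      have "(s - t0) * (k * S z * I z * exp (c*z)) \<ge> (s - t0) * (- (L * m))"
        using der st0 by (intro mult_left_mono) auto
      moreover have "(s - t0) * (L * m) \<le> h * (L * m)"
        using sh Lpos mpos by (intro mult_right_mono) auto
      moreover have "h * (L * m) \<le> m / 2" using hL mpos
      proof -
        have "h * (L * m) = (h * L) * m" by simp
        also have "\<dots> \<le> (1/2) * m" using hL mpos by (intro mult_right_mono) auto
        finally show ?thesis by simp
      qed
      moreover have "(s - t0) * (-(L*m)) = -((s - t0)*(L*m))" by simp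
      ultimately show False using z(3) us \<open>u t0 \<ge> 0\<close> mpos by linarith
    next
      case False
      then have vs: "v s = - m" unfolding m_def g_def by auto
      obtain z where z: "t0 < z" "z < s" "v s - v t0 = (s - t0) * (\<sigma> * E z * exp (d*z))"
        using mvt0[OF t0(1) st0 dv] by blast
      have zz: "z \<in> {t0..s}" using z by auto
      have eq: "\<sigma> * E z * exp (d*z) = (\<sigma> * exp ((d - c) * z)) * u z"
      proof -
        have "exp ((d - c) * z) * exp (c * z) = exp (d * z)" by (simp add: exp_add[symmetric] algebra_simps)
        then show ?thesis unfolding u_def by (metis mult.assoc mult.commute)
      qed
      have "(\<sigma> * exp ((d - c) * z)) * u z \<ge> (\<sigma> * exp ((d - c) * z)) * (- m)"
        using beta[OF zin[OF zz]] bnd[OF zz] by (intro mult_left_mono) auto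
      moreover have "(\<sigma> * exp ((d - c) * z)) * (- m) \<ge> - (L * m)"
        using beta[OF zin[OF zz]] mpos by (simp add: mult_right_mono)
      ultimately have der: "\<sigma> * E z * exp (d*z) \<ge> - (L * m)" using eq by linarith
      have "v t0 \<ge> 0" using t0 unfolding v_def by auto
      have "(s - t0) * (\<sigma> * E z * exp (d*z)) \<ge> (s - t0) * (- (L * m))"
        using der st0 by (intro mult_left_mono) auto
      moreover have "(s - t0) * (L * m) \<le> h * (L * m)"
        using sh Lpos mpos by (intro mult_right_mono) auto
      moreover have "h * (L * m) \<le> m / 2" using hL mpos
      proof -
        have "h * (L * m) = (h * L) * m" by simp
        also have "\<dots> \<le> (1/2) * m" using hL mpos by (intro mult_right_mono) auto
        finally show ?thesis by simp
      qed
      moreover have "(s - t0) * (-(L*m)) = -((s - t0)*(L*m))" by simp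
      ultimately show False using z(3) vs \<open>v t0 \<ge> 0\<close> mpos by linarith
    qed
  qed
qed

lemma E_nonneg: "0 \<le> t \<Longrightarrow> E t \<ge> 0"
  using EI_nonneg[of t] by simp
lemma I_nonneg: "0 \<le> t \<Longrightarrow> I t \<ge> 0"
  using EI_nonneg[of t] by simp


lemma W_le: "0 \<le> t \<Longrightarrow> S t + E t + I t \<le> N"
proof -
  assume t: "0 \<le> t"
  define g where "g = (\<lambda>t. (S t + E t + I t - N) * exp (\<mu> * t))"
  have dg: "(g has_real_derivative
      ((\<Lambda> - k * S t * I t - \<delta> * S t + (k * S t * I t - c * E t) + (\<sigma> * E t - d * I t)) * exp (\<mu> * t)
        + (S t + E t + I t - N) * (exp (\<mu> * t) * \<mu>))) (at t within {0..})" if "0 \<le> t" for t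
  proof -
    have e: "((\<lambda>t. exp (\<mu>*t)) has_real_derivative exp (\<mu>*t) * \<mu>) (at t within {0..})"
      by (auto intro!: derivative_eq_intros)
    have w: "((\<lambda>t. S t + E t + I t - N) has_real_derivative
        (\<Lambda> - k * S t * I t - \<delta> * S t + (k * S t * I t - c * E t) + (\<sigma> * E t - d * I t))) (at t within {0..})"
      using DERIV_diff[OF DERIV_add[OF DERIV_add[OF dS[OF that] dE[OF that]] dI[OF that]] DERIV_const[of N]]
      by simp
    show ?thesis unfolding g_def using DERIV_mult[OF w e] by (simp add: mult.commute)
  qed
  have "g t \<le> 0"
  proof (cases "t = 0")
    case True then show ?thesis using init by (simp add: g_def)
  next
    case False
    then have "0 < t" using t by simp
    obtain z where z: "0 < z" "z < t" "g t - g 0 = (t - 0) *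
      ((\<Lambda> - k * S z * I z - \<delta> * S z + (k * S z * I z - c * E z) + (\<sigma> * E z - d * I z)) * exp (\<mu> * z)
        + (S z + E z + I z - N) * (exp (\<mu> * z) * \<mu>))"
      using mvt0[OF order.refl \<open>0 < t\<close> dg] by blast
    have "(\<Lambda> - k * S z * I z - \<delta> * S z + (k * S z * I z - c * E z) + (\<sigma> * E z - d * I z)) * exp (\<mu> * z)
        + (S z + E z + I z - N) * (exp (\<mu> * z) * \<mu>) = ((\<mu> - \<delta>) * S z + (\<mu> - d) * I z) * exp (\<mu> * z)"
      using rel by (simp add: algebra_simps)
    also have "\<dots> \<le> 0"
    proof -
      have "(\<mu> - \<delta>) * S z \<le> 0" using rel S_nonneg[of z] z by (simp add: mult_nonpos_nonneg)
      moreover have "(\<mu> - d) * I z \<le> 0" using rel I_nonneg[of z] z by (simp add: mult_nonpos_nonneg)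
      ultimately show ?thesis by (simp add: mult_nonpos_nonneg)
    qed
    finally have "t * (((\<Lambda> - k * S z * I z - \<delta> * S z + (k * S z * I z - c * E z) + (\<sigma> * E z - d * I z)) * exp (\<mu> * z)
        + (S z + E z + I z - N) * (exp (\<mu> * z) * \<mu>))) \<le> 0"
      using t by (simp add: mult_nonneg_nonpos)
    moreover have "g 0 \<le> 0" using init by (simp add: g_def)
    ultimately show ?thesis using z(3) by simp
  qed
  then show ?thesis unfolding g_def by (simp add: mult_le_0_iff)
qed

lemma bounds: "0 \<le> t \<Longrightarrow> 0 \<le> S t \<and> S t \<le> N \<and> 0 \<le> E t \<and> E t \<le> N \<and> 0 \<le> I t \<and> I t \<le> N"
proof -
  assume t: "0 \<le> t"
  note h = S_nonneg[OF t] E_nonneg[OF t] I_nonneg[OF t] W_le[OF t]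
  show ?thesis by (intro conjI; insert h; linarith)
qed

end


lemma amgm3: fixes a b c :: real assumes "a > 0" "b > 0" "c > 0"
  shows "a/b + b/c + c/a \<ge> 3"
proof -
  define p where "p = a/b" define q where "q = b/c"
  have pq: "p > 0" "q > 0" using assms by (auto simp: p_def q_def)
  have ca: "c/a = 1/(p*q)" using assms by (simp add: p_def q_def field_simps)
  have key: "p*p*q + p*q*q + 1 - 3*p*q \<ge> 0"
  proof (cases "q \<le> 4")
    case True
    have "4*q*(p*p*q + p*q*q + 1 - 3*p*q) = (2*q*p + (q*q - 3*q))^2 + q*(4 - q)*(q - 1)^2"
      by (simp add: power2_eq_square algebra_simps)
    moreover have "q*(4 - q)*(q - 1)^2 \<ge> 0" using True pq by simp
    ultimately have "4*q*(p*p*q + p*q*q + 1 - 3*p*q) \<ge> 0" by (smt (verit) zero_le_power2)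
    then show ?thesis using pq by (simp add: zero_le_mult_iff)
  next
    case False
    have "p*q*q - 3*p*q = p*q*(q - 3)" by (simp add: algebra_simps)
    moreover have "p*q*(q-3) \<ge> 0" using False pq by simp
    moreover have "p*p*q \<ge> 0" using pq by simp
    ultimately show ?thesis by linarith
  qed
  have "p + q + 1/(p*q) - 3 = (p*p*q + p*q*q + 1 - 3*p*q) / (p*q)"
    using pq by (simp add: field_simps)
  also have "\<dots> \<ge> 0" using key pq by simp
  finally show ?thesis using ca by (simp add: p_def[symmetric] q_def[symmetric])
qed

lemma lyap1:
  fixes S E I Sc Ec Ic \<Lambda> k \<delta> c d \<sigma> :: real
  assumes pos: "S > 0" "E > 0" "I > 0" "Sc > 0" "Ec > 0" "Ic > 0" "\<sigma> > 0" "k > 0"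
    and r: "\<Lambda> = k*Sc*Ic + \<delta>*Sc" "c*Ec = k*Sc*Ic" "\<sigma>*Ec = d*Ic"
  shows "(1 - Sc/S)*(\<Lambda> - k*S*I - \<delta>*S) + (1 - Ec/E)*(k*S*I - c*E) + (c/\<sigma>)*(1 - Ic/I)*(\<sigma>*E - d*I)
     \<le> - \<delta>*(S-Sc)^2/S"
proof -
  have eq: "(1 - Sc/S)*(\<Lambda> - k*S*I - \<delta>*S) + (1 - Ec/E)*(k*S*I - c*E) + (c/\<sigma>)*(1 - Ic/I)*(\<sigma>*E - d*I)
     = - \<delta>*(S-Sc)^2/S + k*Sc*Ic*(3 - (Sc/S + (S*I*Ec)/(Sc*Ic*E) + (E*Ic)/(Ec*I)))"
  proof -
    have d: "d = \<sigma>*Ec/Ic" using r pos by (simp add: field_simps)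
    have cc: "c = k*Sc*Ic/Ec" using r pos by (simp add: field_simps)
    show ?thesis unfolding r(1) d cc using pos by (simp add: field_simps power2_eq_square)
  qed
  have "Sc/S + (S*I*Ec)/(Sc*Ic*E) + (E*Ic)/(Ec*I) \<ge> 3"
  proof -
    have "Sc/S + (S*I*Ec)/(Sc*Ic*E) + (E*Ic)/(Ec*I) = Sc/S + S/((Sc*Ic*E)/(I*Ec)) + ((Sc*Ic*E)/(I*Ec))/Sc"
      using pos by (simp add: field_simps)
    also have "\<dots> \<ge> 3" using pos by (intro amgm3) auto
    finally show ?thesis .
  qed
  then have "k*Sc*Ic*(3 - (Sc/S + (S*I*Ec)/(Sc*Ic*E) + (E*Ic)/(Ec*I))) \<le> 0"
    using pos by (simp add: mult_nonneg_nonpos)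
  then show ?thesis using eq by linarith
qed

lemma lyap2:
  fixes S E I S0 \<Lambda> k \<delta> c d \<sigma> :: real
  assumes pos: "S > 0" "I \<ge> 0" "\<sigma> > 0" "k > 0"
    and r: "\<Lambda> = \<delta>*S0" "S0 \<le> c*d/(\<sigma>*k)"
  shows "(1 - S0/S)*(\<Lambda> - k*S*I - \<delta>*S) + (k*S*I - c*E) + (c/\<sigma>)*(\<sigma>*E - d*I)
     \<le> - \<delta>*(S-S0)^2/S"
proof -
  have eq: "(1 - S0/S)*(\<Lambda> - k*S*I - \<delta>*S) + (k*S*I - c*E) + (c/\<sigma>)*(\<sigma>*E - d*I)
     = - \<delta>*(S-S0)^2/S + k*I*(S0 - c*d/(\<sigma>*k))"
    unfolding r(1) using pos by (simp add: field_simps power2_eq_square)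
  have "k*I*(S0 - c*d/(\<sigma>*k)) \<le> 0" using pos r by (simp add: mult_nonneg_nonpos)
  then show ?thesis using eq by linarith
qed



lemma lip_from_deriv:
  fixes f f' :: "real \<Rightarrow> real"
  assumes d: "\<And>t. T \<le> t \<Longrightarrow> (f has_real_derivative f' t) (at t)"
    and b: "\<And>t. T \<le> t \<Longrightarrow> \<bar>f' t\<bar> \<le> M" and st: "T \<le> s" "T \<le> t"
  shows "\<bar>f s - f t\<bar> \<le> M * \<bar>s - t\<bar>"
proof -
  have main: "\<bar>f b - f a\<bar> \<le> M * (b - a)" if ab: "T \<le> a" "a < b" for a b
  proof -
    obtain z where z: "a < z" "z < b" "f b - f a = (b - a) * f' z"
      using MVT2[OF ab(2), of f f'] d ab by force
    have "\<bar>f b - f a\<bar> = (b - a) * \<bar>f' z\<bar>" using z ab by (simp add: abs_mult)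
    also have "\<dots> \<le> (b - a) * M" using b[of z] z ab by (intro mult_left_mono) auto
    finally show ?thesis by (simp add: mult.commute)
  qed
  consider "s = t" | "s < t" | "t < s" by linarith
  then show ?thesis
  proof cases
    case 1 then show ?thesis by simp
  next
    case 2 then show ?thesis using main[of s t] st by (simp add: abs_minus_commute)
  next
    case 3 then show ?thesis using main[of t s] st by simp
  qed
qed

lemma barbalat:
  fixes G G' h :: "real \<Rightarrow> real"
  assumes dG: "\<And>t. T \<le> t \<Longrightarrow> (G has_real_derivative G' t) (at t)"
    and Gh: "\<And>t. T \<le> t \<Longrightarrow> h t \<le> G' t"
    and lip: "\<And>s t. T \<le> s \<Longrightarrow> T \<le> t \<Longrightarrow> \<bar>h s - h t\<bar> \<le> M * \<bar>s - t\<bar>"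
    and M: "M > 0"
    and cauchy: "\<And>\<eta>. \<eta> > 0 \<Longrightarrow> \<exists>T1. \<forall>s\<ge>T1. \<forall>t\<ge>T1. \<bar>G s - G t\<bar> < \<eta>"
    and eta: "\<eta> > 0"
  shows "\<exists>T2. \<forall>t\<ge>T2. h t < \<eta>"
proof -
  define l where "l = \<eta> / (2*M)"
  have l: "l > 0" "M * l = \<eta>/2" using eta M by (auto simp: l_def)
  obtain T1 where T1: "\<forall>s\<ge>T1. \<forall>t\<ge>T1. \<bar>G s - G t\<bar> < l * \<eta> / 2"
    using cauchy[of "l * \<eta> / 2"] l eta by auto
  show ?thesis
  proof (rule exI[of _ "max T T1"], intro allI impI, rule ccontr)
    fix t assume t: "max T T1 \<le> t" and "\<not> h t < \<eta>"
    then have ht: "h t \<ge> \<eta>" by simp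
    obtain z where z: "t < z" "z < t + l" "G (t + l) - G t = (t + l - t) * G' z"
      using MVT2[of t "t + l" G G'] l dG t by force
    have "\<bar>h z - h t\<bar> \<le> M * \<bar>z - t\<bar>" using lip[of z t] z t by auto
    also have "\<dots> \<le> M * l" using z M by (intro mult_left_mono) auto
    finally have "h z \<ge> \<eta>/2" using ht l by linarith
    then have "G' z \<ge> \<eta>/2" using Gh[of z] z t by force
    then have "l * G' z \<ge> l * (\<eta>/2)" using l by (intro mult_left_mono) auto
    then have "G (t + l) - G t \<ge> l * \<eta> / 2" using z(3) by simp
    moreover have "\<bar>G (t + l) - G t\<bar> < l * \<eta> / 2" using T1 t l by auto
    ultimately show False by linarith
  qed
qed

lemma cauchy_tendsto:
  fixes G :: "real \<Rightarrow> real"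
  assumes "(G \<longlongrightarrow> L) at_top" "\<eta> > 0"
  shows "\<exists>T1. \<forall>s\<ge>T1. \<forall>t\<ge>T1. \<bar>G s - G t\<bar> < \<eta>"
proof -
  have "eventually (\<lambda>t. dist (G t) L < \<eta>/2) at_top" using assms tendsto_iff[of G L at_top] by (metis half_gt_zero)
  then obtain T1 where T1: "\<forall>t\<ge>T1. \<bar>G t - L\<bar> < \<eta>/2" by (auto simp: eventually_at_top_linorder dist_real_def)
  show ?thesis
  proof (intro exI[of _ T1] allI impI)
    fix s t assume "T1 \<le> s" "T1 \<le> t"
    then have "\<bar>G s - L\<bar> < \<eta>/2" "\<bar>G t - L\<bar> < \<eta>/2" using T1 by auto
    then show "\<bar>G s - G t\<bar> < \<eta>" by linarith
  qed
qed

lemma cauchy_mono: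
  fixes G :: "real \<Rightarrow> real"
  assumes mono: "\<And>s t. T \<le> s \<Longrightarrow> s \<le> t \<Longrightarrow> G s \<le> G t"
    and bnd: "\<And>t. T \<le> t \<Longrightarrow> G t \<le> B" and eta: "\<eta> > 0"
  shows "\<exists>T1. \<forall>s\<ge>T1. \<forall>t\<ge>T1. \<bar>G s - G t\<bar> < \<eta>"
proof -
  define A where "A = G ` {T..}"
  have ne: "A \<noteq> {}" by (auto simp: A_def)
  have bdd: "bdd_above A" unfolding A_def bdd_above_def using bnd by auto
  have "Sup A - \<eta> < Sup A" using eta by simp
  then obtain y where "y \<in> A" "Sup A - \<eta> < y" using less_cSupD[OF ne] by blast
  then obtain t1 where t1: "T \<le> t1" "Sup A - \<eta> < G t1" by (auto simp: A_def)
  show ?thesis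
  proof (intro exI[of _ t1] allI impI)
    fix s t assume st: "t1 \<le> s" "t1 \<le> t"
    have "G s \<le> Sup A" "G t \<le> Sup A" using st t1 cSup_upper[OF _ bdd] by (auto simp: A_def)
    moreover have "G t1 \<le> G s" "G t1 \<le> G t" using mono st t1 by auto
    ultimately show "\<bar>G s - G t\<bar> < \<eta>" using t1 by linarith
  qed
qed

lemma mono_from_deriv:
  fixes G G' :: "real \<Rightarrow> real"
  assumes "\<And>t. T \<le> t \<Longrightarrow> (G has_real_derivative G' t) (at t)" "\<And>t. T \<le> t \<Longrightarrow> G' t \<ge> 0"
    and "T \<le> s" "s \<le> t"
  shows "G s \<le> G t"
proof (cases "s = t")
  case False
  then have "s < t" using assms by simp
  then obtain z where "s < z" "z < t" "G t - G s = (t - s) * G' z"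
    using MVT2[of s t G G'] assms by force
  moreover have "G' z \<ge> 0" using assms \<open>s < z\<close> by auto
  moreover have "(t - s) * G' z \<ge> 0" using \<open>s < t\<close> calculation(4) by simp
  ultimately show ?thesis by linarith
qed simp



lemma deriv_to_zero:
  fixes f f' f'' :: "real \<Rightarrow> real"
  assumes d1: "\<And>t. T \<le> t \<Longrightarrow> (f has_real_derivative f' t) (at t)"
    and d2: "\<And>t. T \<le> t \<Longrightarrow> (f' has_real_derivative f'' t) (at t)"
    and b: "\<And>t. T \<le> t \<Longrightarrow> \<bar>f'' t\<bar> \<le> M" and lim: "(f \<longlongrightarrow> L) at_top"
  shows "(f' \<longlongrightarrow> 0) at_top"
proof -
  define M' where "M' = \<bar>M\<bar> + 1"
  have M': "M' > 0" unfolding M'_def by simp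
  have bM: "\<bar>f'' t\<bar> \<le> M'" if "T \<le> t" for t
    using b[OF that] abs_ge_self[of M] unfolding M'_def by linarith
  have lip: "\<bar>f' s - f' t\<bar> \<le> M' * \<bar>s - t\<bar>" if "T \<le> s" "T \<le> t" for s t
    by (rule lip_from_deriv[where T=T and f=f' and f'=f'' and M=M', OF d2 _ that])
       (auto intro: bM)
  have lip2: "\<bar>- f' s - - f' t\<bar> \<le> M' * \<bar>s - t\<bar>" if "T \<le> s" "T \<le> t" for s t
    using lip[OF that] by simp
  have lim2: "((\<lambda>t. - f t) \<longlongrightarrow> - L) at_top" using tendsto_minus[OF lim] .
  show ?thesis unfolding tendsto_iff
  proof (intro allI impI)
    fix \<eta> :: real assume eta: "\<eta> > 0"
    obtain T2 where T2: "\<forall>t\<ge>T2. f' t < \<eta>"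
      using barbalat[OF d1 order.refl lip M' cauchy_tendsto[OF lim] eta] by blast
    obtain T3 where T3: "\<forall>t\<ge>T3. - f' t < \<eta>"
      using barbalat[of T "\<lambda>t. - f t" "\<lambda>t. - f' t", OF DERIV_minus[OF d1] order.refl lip2 M'
          cauchy_tendsto[OF lim2] eta] by blast
    show "eventually (\<lambda>t. dist (f' t) 0 < \<eta>) at_top"
      unfolding eventually_at_top_linorder dist_real_def
      using T2 T3 by (intro exI[of _ "max T2 T3"]) (auto simp: abs_less_iff)
  qed
qed

context seir begin

definition "K = \<Lambda> + k*N*N + \<delta>*N + c*N + \<sigma>*N + d*N"

lemma K_pos: "K > 0" unfolding K_def using pos by (simp add: add_pos_nonneg)

lemma dS_at: "0 < t \<Longrightarrow> (S has_real_derivative (\<Lambda> - k * S t * I t - \<delta> * S t)) (at t)"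
  using dS[of t] at_pos[of t] by simp
lemma dE_at: "0 < t \<Longrightarrow> (E has_real_derivative (k * S t * I t - c * E t)) (at t)"
  using dE[of t] at_pos[of t] by simp
lemma dI_at: "0 < t \<Longrightarrow> (I has_real_derivative (\<sigma> * E t - d * I t)) (at t)"
  using dI[of t] at_pos[of t] by simp

lemma Sd_bound: "0 \<le> t \<Longrightarrow> \<bar>\<Lambda> - k * S t * I t - \<delta> * S t\<bar> \<le> K"
proof -
  assume t: "0 \<le> t"
  note b = bounds[OF t]
  have p1: "0 \<le> S t * I t" using b by simp
  have p2: "S t * I t \<le> N * N" using b by (intro mult_mono) auto
  have "k * (S t * I t) \<le> k * (N * N)" using p2 pos by (intro mult_left_mono) auto
  moreover have "0 \<le> k * (S t * I t)" using p1 pos by simp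
  moreover have "\<delta> * S t \<le> \<delta> * N" "0 \<le> \<delta> * S t" using b pos by auto
  moreover have "0 \<le> c*N" "0 \<le> \<sigma>*N" "0 \<le> d*N" using pos by auto
  moreover have "k * S t * I t = k*(S t*I t)" "k*N*N = k*(N*N)" by simp_all
  moreover have "0 \<le> \<Lambda>" "0 \<le> \<delta>*N" "0 \<le> c*N" "0 \<le> \<sigma>*N" "0 \<le> d*N" "0 \<le> k*(N*N)" using pos by auto
  ultimately show ?thesis unfolding K_def abs_le_iff by (intro conjI; linarith)
qed

lemma Ed_bound: "0 \<le> t \<Longrightarrow> \<bar>k * S t * I t - c * E t\<bar> \<le> K"
proof -
  assume t: "0 \<le> t"
  note b = bounds[OF t]
  have p1: "0 \<le> S t * I t" using b by simp
  have p2: "S t * I t \<le> N * N" using b by (intro mult_mono) auto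
  have "k * (S t * I t) \<le> k * (N * N)" using p2 pos by (intro mult_left_mono) auto
  moreover have "0 \<le> k * (S t * I t)" using p1 pos by simp
  moreover have "c * E t \<le> c * N" "0 \<le> c * E t" using b pos by auto
  moreover have "0 \<le> \<delta>*N" "0 \<le> \<sigma>*N" "0 \<le> d*N" using pos by auto
  moreover have "k * S t * I t = k*(S t*I t)" "k*N*N = k*(N*N)" by simp_all
  moreover have "0 \<le> \<Lambda>" "0 \<le> \<delta>*N" "0 \<le> c*N" "0 \<le> \<sigma>*N" "0 \<le> d*N" "0 \<le> k*(N*N)" using pos by auto
  ultimately show ?thesis unfolding K_def abs_le_iff by (intro conjI; linarith)
qed

lemma Id_bound: "0 \<le> t \<Longrightarrow> \<bar>\<sigma> * E t - d * I t\<bar> \<le> K"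
proof -
  assume t: "0 \<le> t"
  note b = bounds[OF t]
  have "\<sigma> * E t \<le> \<sigma> * N" "0 \<le> \<sigma> * E t" "d * I t \<le> d * N" "0 \<le> d * I t" using b pos by auto
  moreover have "0 \<le> \<delta>*N" "0 \<le> c*N" "0 \<le> k*N*N" using pos by auto
  moreover have "0 \<le> \<Lambda>" "0 \<le> \<delta>*N" "0 \<le> c*N" "0 \<le> \<sigma>*N" "0 \<le> d*N" "0 \<le> k*N*N" using pos by auto
  ultimately show ?thesis unfolding K_def abs_le_iff by (intro conjI; linarith)
qed

lemma abs_prod_le: "\<bar>a\<bar> \<le> (A::real) \<Longrightarrow> \<bar>b\<bar> \<le> B \<Longrightarrow> \<bar>a * b\<bar> \<le> A * B"
  by (simp add: abs_mult mult_mono')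

lemma S_to_I:
  assumes Sc: "Sc > 0" and lim: "(S \<longlongrightarrow> Sc) at_top"
  shows "(I \<longlongrightarrow> (\<Lambda> - \<delta>*Sc)/(k*Sc)) at_top"
proof -
  define Sd where "Sd = (\<lambda>t. \<Lambda> - k * S t * I t - \<delta> * S t)"
  define Sdd where "Sdd = (\<lambda>t. - k * (Sd t * I t + S t * (\<sigma> * E t - d * I t)) - \<delta> * Sd t)"
  have d1: "(S has_real_derivative Sd t) (at t)" if "1 \<le> t" for t
    unfolding Sd_def using dS_at that by simp
  have d2: "(Sd has_real_derivative Sdd t) (at t)" if "1 \<le> t" for t
  proof -
    have a: "(S has_real_derivative Sd t) (at t)" using d1 that .
    have b: "(I has_real_derivative (\<sigma> * E t - d * I t)) (at t)" using dI_at that by simp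
    have "((\<lambda>t. \<Lambda> - k * (S t * I t) - \<delta> * S t) has_real_derivative
        (0 - k * (Sd t * I t + S t * (\<sigma> * E t - d * I t)) - \<delta> * Sd t)) (at t)"
    proof -
      have m: "((\<lambda>t. S t * I t) has_real_derivative (Sd t * I t + S t * (\<sigma> * E t - d * I t))) (at t)"
        using DERIV_mult[OF a b] by (simp add: mult.commute)
      show ?thesis by (intro DERIV_diff DERIV_const DERIV_cmult m a)
    qed
    then show ?thesis unfolding Sdd_def Sd_def by (simp add: mult.assoc)
  qed
  have bd: "\<bar>Sdd t\<bar> \<le> k * (K*N + K*N) + \<delta> * K" if "1 \<le> t" for t
  proof -
    have t0: "0 \<le> t" using that by simp
    have h1: "\<bar>Sd t * I t\<bar> \<le> K * N"
      using abs_prod_le[OF Sd_bound[OF t0]] bounds[OF t0] unfolding Sd_def by auto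
    have h2: "\<bar>S t * (\<sigma> * E t - d * I t)\<bar> \<le> K * N"
      using abs_prod_le[OF _ Id_bound[OF t0], of "S t" N] bounds[OF t0] by (auto simp: mult.commute)
    have h3: "\<bar>Sd t\<bar> \<le> K" using Sd_bound[OF t0] unfolding Sd_def .
    have "\<bar>Sdd t\<bar> \<le> \<bar>- k * (Sd t * I t + S t * (\<sigma> * E t - d * I t))\<bar> + \<bar>\<delta> * Sd t\<bar>"
      unfolding Sdd_def by (rule abs_triangle_ineq4)
    also have "\<dots> = k * \<bar>Sd t * I t + S t * (\<sigma> * E t - d * I t)\<bar> + \<delta> * \<bar>Sd t\<bar>"
      using pos by (simp add: abs_mult)
    finally have "\<bar>Sdd t\<bar> \<le> k * \<bar>Sd t * I t + S t * (\<sigma> * E t - d * I t)\<bar> + \<delta> * \<bar>Sd t\<bar>" .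
    also have "\<dots> \<le> k * (K*N + K*N) + \<delta> * K"
    proof (intro add_mono mult_left_mono)
      show "\<bar>Sd t * I t + S t * (\<sigma> * E t - d * I t)\<bar> \<le> K * N + K * N"
        using abs_triangle_ineq[of "Sd t * I t" "S t * (\<sigma> * E t - d * I t)"] h1 h2 by linarith
    qed (use h3 pos in auto)
    finally show ?thesis .
  qed
  have Sd0: "(Sd \<longlongrightarrow> 0) at_top" by (rule deriv_to_zero[OF d1 d2 bd lim])
  have ev: "eventually (\<lambda>t. I t = ((\<Lambda> - \<delta> * S t) - Sd t) / (k * S t)) at_top"
  proof -
    have "eventually (\<lambda>t. S t > 0) at_top" using order_tendstoD(1)[OF lim Sc] .
    then show ?thesis by eventually_elim (use pos in \<open>simp add: Sd_def field_simps\<close>)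
  qed
  have "((\<lambda>t. ((\<Lambda> - \<delta> * S t) - Sd t) / (k * S t)) \<longlongrightarrow> ((\<Lambda> - \<delta> * Sc) - 0) / (k * Sc)) at_top"
    using Sc pos by (intro tendsto_intros lim Sd0) auto
  then show ?thesis using ev by (simp add: tendsto_cong)
qed

lemma I_to_E:
  assumes lim: "(I \<longlongrightarrow> Ic) at_top"
  shows "(E \<longlongrightarrow> d * Ic / \<sigma>) at_top"
proof -
  define Id where "Id = (\<lambda>t. \<sigma> * E t - d * I t)"
  define Idd where "Idd = (\<lambda>t. \<sigma> * (k * S t * I t - c * E t) - d * Id t)"
  have d1: "(I has_real_derivative Id t) (at t)" if "1 \<le> t" for t
    unfolding Id_def using dI_at that by simp
  have d2: "(Id has_real_derivative Idd t) (at t)" if "1 \<le> t" for t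
  proof -
    have a: "(I has_real_derivative Id t) (at t)" using d1 that .
    have b: "(E has_real_derivative (k * S t * I t - c * E t)) (at t)" using dE_at that by simp
    show ?thesis unfolding Idd_def Id_def
      using DERIV_diff[OF DERIV_cmult[OF b, of \<sigma>] DERIV_cmult[OF a, of d]] unfolding Id_def .
  qed
  have bd: "\<bar>Idd t\<bar> \<le> \<sigma> * K + d * K" if "1 \<le> t" for t
  proof -
    have t0: "0 \<le> t" using that by simp
    have "\<bar>Idd t\<bar> \<le> \<bar>\<sigma> * (k * S t * I t - c * E t)\<bar> + \<bar>d * Id t\<bar>"
      unfolding Idd_def by (rule abs_triangle_ineq4)
    also have "\<dots> = \<sigma> * \<bar>k * S t * I t - c * E t\<bar> + d * \<bar>Id t\<bar>" using pos by (simp add: abs_mult)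
    finally have "\<bar>Idd t\<bar> \<le> \<sigma> * \<bar>k * S t * I t - c * E t\<bar> + d * \<bar>Id t\<bar>" .
    also have "\<dots> \<le> \<sigma> * K + d * K"
      using Ed_bound[OF t0] Id_bound[OF t0] pos unfolding Id_def by (intro add_mono mult_left_mono) auto
    finally show ?thesis .
  qed
  have Id0: "(Id \<longlongrightarrow> 0) at_top" by (rule deriv_to_zero[OF d1 d2 bd lim])
  have eq: "E t = (Id t + d * I t) / \<sigma>" for t using pos by (simp add: Id_def field_simps)
  have "((\<lambda>t. (Id t + d * I t) / \<sigma>) \<longlongrightarrow> (0 + d * Ic) / \<sigma>) at_top"
    using pos by (intro tendsto_intros Id0 lim) auto
  moreover have "E = (\<lambda>t. (Id t + d * I t) / \<sigma>)" using eq by (rule ext)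
  ultimately show ?thesis by simp
qed

lemma lyap_generic:
  fixes V V' :: "real \<Rightarrow> real"
  assumes T0: "1 \<le> T0" and Spos: "\<And>t. T0 \<le> t \<Longrightarrow> S t > 0" and Sc: "0 \<le> Sc"
    and dV: "\<And>t. T0 \<le> t \<Longrightarrow> (V has_real_derivative V' t) (at t)"
    and V'le: "\<And>t. T0 \<le> t \<Longrightarrow> V' t \<le> - \<delta> * (S t - Sc)^2 / S t"
    and Vlow: "\<And>t. T0 \<le> t \<Longrightarrow> V t \<ge> - B"
  shows "(S \<longlongrightarrow> Sc) at_top"
proof -
  define h where "h = (\<lambda>t. \<delta> / N * ((S t - Sc) * (S t - Sc)))"
  have t0: "0 \<le> t" if "T0 \<le> t" for t using that T0 by simp
  have hG: "h t \<le> - V' t" if "T0 \<le> t" for t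
  proof -
    have b: "0 < S t" "S t \<le> N" using Spos[OF that] bounds[OF t0[OF that]] by auto
    have "(S t - Sc)^2 / N \<le> (S t - Sc)^2 / S t"
      using b by (intro divide_left_mono) auto
    then have "\<delta> * ((S t - Sc)^2 / N) \<le> \<delta> * ((S t - Sc)^2 / S t)" using pos by (intro mult_left_mono) auto
    then show ?thesis using V'le[OF that] unfolding h_def by (simp add: power2_eq_square)
  qed
  have h0: "0 \<le> h t" for t unfolding h_def using pos by simp
  have dh: "(h has_real_derivative (\<delta> / N * (2 * (S t - Sc) * (\<Lambda> - k * S t * I t - \<delta> * S t)))) (at t)"
    if "T0 \<le> t" for t
  proof -
    have a: "((\<lambda>t. S t - Sc) has_real_derivative (\<Lambda> - k * S t * I t - \<delta> * S t)) (at t)"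
      using DERIV_diff[OF dS_at DERIV_const] that T0 by simp
    show ?thesis unfolding h_def
      using DERIV_cmult[OF DERIV_mult[OF a a], of "\<delta> / N"] by (simp add: algebra_simps)
  qed
  have hb: "\<bar>\<delta> / N * (2 * (S t - Sc) * (\<Lambda> - k * S t * I t - \<delta> * S t))\<bar> \<le> \<delta> / N * (2 * (N + Sc) * K)"
    if "T0 \<le> t" for t
  proof -
    have "\<bar>S t - Sc\<bar> \<le> N + Sc" using bounds[OF t0[OF that]] Sc by (auto simp: abs_le_iff)
    then have "\<bar>(S t - Sc) * (\<Lambda> - k * S t * I t - \<delta> * S t)\<bar> \<le> (N + Sc) * K"
      using abs_prod_le Sd_bound[OF t0[OF that]] by blast
    then have le: "(\<delta> / N * 2) * \<bar>(S t - Sc) * (\<Lambda> - k * S t * I t - \<delta> * S t)\<bar> \<le> (\<delta> / N * 2) * ((N + Sc) * K)"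
      using pos by (intro mult_left_mono) auto
    have "\<bar>\<delta> / N * (2 * (S t - Sc) * (\<Lambda> - k * S t * I t - \<delta> * S t))\<bar>
       = (\<delta> / N * 2) * \<bar>(S t - Sc) * (\<Lambda> - k * S t * I t - \<delta> * S t)\<bar>"
      using pos by (simp only: abs_mult mult.assoc) simp
    also have "\<dots> \<le> (\<delta> / N * 2) * ((N + Sc) * K)" by (rule le)
    also have "\<dots> = \<delta> / N * (2 * (N + Sc) * K)" by simp
    finally show ?thesis .
  qed
  define M where "M = \<delta> / N * (2 * (N + Sc) * K) + 1"
  have M: "M > 0" unfolding M_def using pos K_pos Sc by (simp add: add_pos_nonneg)
  have lip: "\<bar>h s - h t\<bar> \<le> M * \<bar>s - t\<bar>" if "T0 \<le> s" "T0 \<le> t" for s t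
  proof (rule lip_from_deriv[where T=T0 and f=h, OF dh _ that])
    fix t assume "T0 \<le> t"
    from hb[OF this] show "\<bar>\<delta> / N * (2 * (S t - Sc) * (\<Lambda> - k * S t * I t - \<delta> * S t))\<bar> \<le> M"
      unfolding M_def by linarith
  qed
  have dG: "((\<lambda>t. - V t) has_real_derivative - V' t) (at t)" if "T0 \<le> t" for t
    using DERIV_minus[OF dV[OF that]] .
  have G'0: "V' t \<le> 0" if "T0 \<le> t" for t using hG[OF that] h0[of t] by linarith
  have cau: "\<exists>T1. \<forall>s\<ge>T1. \<forall>t\<ge>T1. \<bar>- V s - - V t\<bar> < \<eta>" if "\<eta> > 0" for \<eta>
  proof (rule cauchy_mono[where T=T0 and B=B, OF _ _ that])
    show "- V s \<le> - V t" if "T0 \<le> s" "s \<le> t" for s t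
    proof (rule mono_from_deriv[where T=T0, OF dG _ that])
      fix u :: real assume "T0 \<le> u" then show "0 \<le> - V' u" using G'0[of u] by simp
    qed
    show "- V t \<le> B" if "T0 \<le> t" for t using Vlow[OF that] by simp
  qed
  show ?thesis unfolding tendsto_iff
  proof (intro allI impI)
    fix e :: real assume e: "e > 0"
    have "\<delta> / N * (e * e) > 0" using e pos by simp
    then obtain T2 where T2: "\<forall>t\<ge>T2. h t < \<delta> / N * (e * e)"
      using barbalat[where T=T0, OF dG hG lip M cau] by blast
    show "eventually (\<lambda>t. dist (S t) Sc < e) at_top"
      unfolding eventually_at_top_linorder
    proof (intro exI[of _ T2] allI impI)
      fix t assume "T2 \<le> t"
      then have "\<delta> / N * ((S t - Sc) * (S t - Sc)) < \<delta> / N * (e * e)" using T2 unfolding h_def by auto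
      moreover have "\<delta> / N > 0" using pos by simp
      ultimately have "(S t - Sc) * (S t - Sc) < e * e" using mult_less_cancel_left_pos by blast
      then have "\<bar>S t - Sc\<bar> * \<bar>S t - Sc\<bar> < e * e" by (simp only: abs_mult_self_eq)
      then have "\<bar>S t - Sc\<bar> < e" using e
        by (metis abs_ge_zero linorder_not_less mult_mono less_le_trans order.refl not_less_iff_gr_or_eq)
      then show "dist (S t) Sc < e" by (simp add: dist_real_def)
    qed
  qed
qed

end


lemma dlog:
  fixes f :: "real \<Rightarrow> real"
  assumes "(f has_real_derivative f') (at t)" "f t > 0"
  shows "((\<lambda>t. f t - a * ln (f t)) has_real_derivative (1 - a / f t) * f') (at t)"
proof -
  have "((\<lambda>t. ln (f t)) has_real_derivative (1 / f t) * f') (at t)"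
    by (rule DERIV_chain2[OF DERIV_ln_divide[OF assms(2)] assms(1)])
  from DERIV_diff[OF assms(1) DERIV_cmult[OF this, of a]] show ?thesis
    by (simp add: algebra_simps)
qed

lemma lnbound: "0 < (x::real) \<Longrightarrow> x \<le> N \<Longrightarrow> 0 \<le> a \<Longrightarrow> x - a * ln x \<ge> - (a * ln N)"
proof -
  assume h: "0 < x" "x \<le> N" "0 \<le> a"
  have "ln x \<le> ln N" using h by simp
  then have "a * ln x \<le> a * ln N" using h by (intro mult_left_mono) auto
  then show ?thesis using h by linarith
qed

context seir begin

lemma case_endemic:
  assumes T0: "1 \<le> T0" and eps: "\<And>t. T0 \<le> t \<Longrightarrow> S t > 0 \<and> E t > 0 \<and> I t > 0"
    and pc: "Sc > 0" "Ec > 0" "Ic > 0"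
    and r: "\<Lambda> = k*Sc*Ic + \<delta>*Sc" "c*Ec = k*Sc*Ic" "\<sigma>*Ec = d*Ic"
  shows "(S \<longlongrightarrow> Sc) at_top" "(I \<longlongrightarrow> Ic) at_top" "(E \<longlongrightarrow> Ec) at_top"
proof -
  define V where "V = (\<lambda>t. (S t - Sc * ln (S t)) + (E t - Ec * ln (E t)) + c / \<sigma> * (I t - Ic * ln (I t)))"
  define V' where "V' = (\<lambda>t. (1 - Sc / S t) * (\<Lambda> - k * S t * I t - \<delta> * S t)
      + (1 - Ec / E t) * (k * S t * I t - c * E t) + c / \<sigma> * ((1 - Ic / I t) * (\<sigma> * E t - d * I t)))"
  have t0: "0 < t" if "T0 \<le> t" for t using that T0 by simp
  have dV: "(V has_real_derivative V' t) (at t)" if "T0 \<le> t" for t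
    unfolding V_def V'_def
    using eps[OF that] dlog[OF dS_at[OF t0[OF that]], of Sc] dlog[OF dE_at[OF t0[OF that]], of Ec]
       dlog[OF dI_at[OF t0[OF that]], of Ic]
    by (intro DERIV_add DERIV_cmult) auto
  have V'le: "V' t \<le> - \<delta> * (S t - Sc)^2 / S t" if "T0 \<le> t" for t
    using lyap1[of "S t" "E t" "I t" Sc Ec Ic \<sigma> k \<Lambda> \<delta> c d] eps[OF that] pc r pos
    unfolding V'_def by (simp add: mult.assoc)
  have Vlow: "V t \<ge> - (Sc * ln N + Ec * ln N + c / \<sigma> * (Ic * ln N))" if "T0 \<le> t" for t
  proof -
    have b: "S t \<le> N" "E t \<le> N" "I t \<le> N" using bounds[of t] t0[OF that] by auto
    have l: "S t - Sc * ln (S t) \<ge> - (Sc * ln N)" "E t - Ec * ln (E t) \<ge> - (Ec * ln N)"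
         "I t - Ic * ln (I t) \<ge> - (Ic * ln N)"
      using lnbound b eps[OF that] pc by auto
    moreover have "c / \<sigma> > 0" using pos by simp
    ultimately have "c / \<sigma> * (I t - Ic * ln (I t)) \<ge> c / \<sigma> * (- (Ic * ln N))"
      by (intro mult_left_mono) auto
    then show ?thesis unfolding V_def using l by simp
  qed
  show S: "(S \<longlongrightarrow> Sc) at_top"
    by (rule lyap_generic[OF T0 _ _ dV V'le Vlow]) (use eps pc in auto)
  have "(\<Lambda> - \<delta>*Sc)/(k*Sc) = Ic" using r pc pos by (simp add: field_simps)
  then show I: "(I \<longlongrightarrow> Ic) at_top" using S_to_I[OF pc(1) S] by simp
  have "d * Ic / \<sigma> = Ec" using r pos by (simp add: field_simps)
  then show "(E \<longlongrightarrow> Ec) at_top" using I_to_E[OF I] by simp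
qed

lemma case_dfe:
  assumes T0: "1 \<le> T0" and eps: "\<And>t. T0 \<le> t \<Longrightarrow> S t > 0 \<and> E t > 0 \<and> I t \<ge> \<epsilon>" and e: "\<epsilon> > 0"
    and r: "\<Lambda> / \<delta> \<le> c*d/(\<sigma>*k)"
  shows False
proof -
  define S0 where "S0 = \<Lambda> / \<delta>"
  have S0: "S0 > 0" "\<Lambda> = \<delta> * S0" using pos by (auto simp: S0_def)
  define V where "V = (\<lambda>t. (S t - S0 * ln (S t)) + E t + c / \<sigma> * I t)"
  define V' where "V' = (\<lambda>t. (1 - S0 / S t) * (\<Lambda> - k * S t * I t - \<delta> * S t)
      + (k * S t * I t - c * E t) + c / \<sigma> * (\<sigma> * E t - d * I t))"
  have t0: "0 < t" if "T0 \<le> t" for t using that T0 by simp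
  have dV: "(V has_real_derivative V' t) (at t)" if "T0 \<le> t" for t
    unfolding V_def V'_def
    using eps[OF that] dlog[OF dS_at[OF t0[OF that]], of S0] dE_at[OF t0[OF that]] dI_at[OF t0[OF that]]
    by (intro DERIV_add DERIV_cmult) auto
  have V'le: "V' t \<le> - \<delta> * (S t - S0)^2 / S t" if "T0 \<le> t" for t
    using lyap2[of "S t" "I t" \<sigma> k \<Lambda> \<delta> S0 c d "E t"] eps[OF that] e r pos S0
    unfolding V'_def S0_def by (simp add: mult.assoc)
  have Vlow: "V t \<ge> - (S0 * ln N)" if "T0 \<le> t" for t
  proof -
    have b: "S t \<le> N" "0 \<le> E t" "0 \<le> I t" using bounds[of t] t0[OF that] by auto
    have "S t - S0 * ln (S t) \<ge> - (S0 * ln N)"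
      using lnbound b eps[OF that] S0 by auto
    moreover have "c / \<sigma> * I t \<ge> 0" using pos b by simp
    ultimately show ?thesis unfolding V_def using b by simp
  qed
  have S: "(S \<longlongrightarrow> S0) at_top"
    by (rule lyap_generic[OF T0 _ _ dV V'le Vlow]) (use eps S0 in auto)
  have eq: "(\<Lambda> - \<delta>*S0)/(k*S0) = 0" using S0 by simp
  have "(I \<longlongrightarrow> 0) at_top" using S_to_I[OF S0(1) S] unfolding eq .
  then have "eventually (\<lambda>t. I t < \<epsilon>) at_top" using order_tendstoD(2) e by blast
  moreover have "eventually (\<lambda>t. I t \<ge> \<epsilon>) at_top"
    unfolding eventually_at_top_linorder using eps by blast
  ultimately have "eventually (\<lambda>t. I t < \<epsilon> \<and> I t \<ge> \<epsilon>) at_top" by (rule eventually_conj)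
  then obtain T where "\<forall>t\<ge>T. I t < \<epsilon> \<and> I t \<ge> \<epsilon>" unfolding eventually_at_top_linorder by blast
  then show False by force
qed

end


lemma omega_of_tendsto:
  fixes x :: "real \<Rightarrow> 'a::metric_space"
  assumes "(x \<longlongrightarrow> L) at_top"
  shows "omega_limit x = {L}"
proof
  show "omega_limit x \<subseteq> {L}"
  proof
    fix y assume "y \<in> omega_limit x"
    then obtain t :: "nat \<Rightarrow> real" where t: "filterlim t at_top sequentially" "(\<lambda>n. x (t n)) \<longlonglongrightarrow> y"
      unfolding omega_limit_def by blast
    have "(\<lambda>n. x (t n)) \<longlonglongrightarrow> L" using filterlim_compose[OF assms t(1)] .
    then show "y \<in> {L}" using LIMSEQ_unique t(2) by auto
  qed
  show "{L} \<subseteq> omega_limit x"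
    using filterlim_compose[OF assms filterlim_real_sequentially] filterlim_real_sequentially
    unfolding omega_limit_def by blast
qed

lemma interior_Omega: "z \<in> interior (Omega N) \<Longrightarrow> 0 < fst z \<and> 0 < fst (snd z) \<and> 0 < snd (snd z)"
proof -
  assume z: "z \<in> interior (Omega N)"
  have s1: "Omega N \<subseteq> {w. ((1::real), (0::real), (0::real)) \<bullet> w \<ge> (0::real)}" by (auto simp: Omega_def)
  have s2: "Omega N \<subseteq> {w. ((0::real), (1::real), (0::real)) \<bullet> w \<ge> (0::real)}" by (auto simp: Omega_def)
  have s3: "Omega N \<subseteq> {w. ((0::real), (0::real), (1::real)) \<bullet> w \<ge> (0::real)}" by (auto simp: Omega_def)
  have "z \<in> interior {w. ((1::real), (0::real), (0::real)) \<bullet> w \<ge> (0::real)}" "z \<in> interior {w. ((0::real), (1::real), (0::real)) \<bullet> w \<ge> (0::real)}"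
       "z \<in> interior {w. ((0::real), (0::real), (1::real)) \<bullet> w \<ge> (0::real)}"
    using interior_mono[OF s1] interior_mono[OF s2] interior_mono[OF s3] z by auto
  moreover have "interior {w. ((1::real), (0::real), (0::real)) \<bullet> w \<ge> (0::real)} = {w. ((1::real), (0::real), (0::real)) \<bullet> w > (0::real)}"
    by (rule interior_halfspace_ge) (simp add: zero_prod_def)
  moreover have "interior {w. ((0::real), (1::real), (0::real)) \<bullet> w \<ge> (0::real)} = {w. ((0::real), (1::real), (0::real)) \<bullet> w > (0::real)}"
    by (rule interior_halfspace_ge) (simp add: zero_prod_def)
  moreover have "interior {w. ((0::real), (0::real), (1::real)) \<bullet> w \<ge> (0::real)} = {w. ((0::real), (0::real), (1::real)) \<bullet> w > (0::real)}"
    by (rule interior_halfspace_ge) (simp add: zero_prod_def)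
  ultimately show ?thesis by (cases z) auto
qed

lemma eventual_pos:
  fixes x :: "real \<Rightarrow> real \<times> real \<times> real"
  assumes bnd: "\<And>t. 0 \<le> t \<Longrightarrow> x t \<in> {0..N} \<times> {0..N} \<times> {0..N}"
    and om: "omega_limit x \<subseteq> interior (Omega N)"
  shows "\<exists>\<epsilon>>0. \<exists>T. \<forall>t\<ge>T. \<epsilon> \<le> fst (x t) \<and> \<epsilon> \<le> fst (snd (x t)) \<and> \<epsilon> \<le> snd (snd (x t))"
proof (rule ccontr)
  define m where "m = (\<lambda>z::real\<times>real\<times>real. min (fst z) (min (fst (snd z)) (snd (snd z))))"
  assume neg: "\<not> ?thesis"
  have "\<exists>t. real n \<le> t \<and> m (x t) < inverse (real (Suc n))" for n
  proof -
    have "inverse (real (Suc n)) > 0" by simp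
    then obtain t where "t \<ge> real n" "\<not> (inverse (real (Suc n)) \<le> fst (x t) \<and> inverse (real (Suc n)) \<le> fst (snd (x t))
        \<and> inverse (real (Suc n)) \<le> snd (snd (x t)))"
      using neg by blast
    then show ?thesis unfolding m_def by (intro exI[of _ t]) auto
  qed
  then obtain t where t: "\<And>n. real n \<le> t n" "\<And>n. m (x (t n)) < inverse (real (Suc n))" by metis
  have cK: "compact ({0..N} \<times> {0..N} \<times> {0..N::real})" by (intro compact_Times compact_Icc)
  have inK: "\<forall>n. x (t n) \<in> {0..N} \<times> {0..N} \<times> {0..N}" using bnd t(1) order.trans[OF of_nat_0_le_iff] by blast
  obtain y r where yr: "strict_mono r" "((\<lambda>n. x (t n)) \<circ> r) \<longlonglongrightarrow> y"
    using seq_compactE[OF compact_imp_seq_compact[OF cK] inK] by blast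
  have "filterlim (\<lambda>n. t (r n)) at_top sequentially"
  proof (rule filterlim_at_top_mono[OF filterlim_real_sequentially])
    show "eventually (\<lambda>n. real n \<le> t (r n)) sequentially"
      using seq_suble[OF yr(1)] t(1) by (intro always_eventually allI) (meson of_nat_le_iff order.trans)
  qed
  then have "y \<in> omega_limit x" using yr(2) unfolding omega_limit_def o_def by blast
  then have "y \<in> interior (Omega N)" using om by blast
  then have my: "m y > 0" using interior_Omega unfolding m_def by auto
  have l1: "(\<lambda>n. m (x (t (r n)))) \<longlonglongrightarrow> m y"
    using yr(2) unfolding m_def o_def by (intro tendsto_intros)
  have l2: "(\<lambda>n. inverse (real (Suc (r n)))) \<longlonglongrightarrow> 0"
    using filterlim_compose[OF LIMSEQ_inverse_real_of_nat filterlim_subseq[OF yr(1)]] .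
  have "m y \<le> 0"
    by (rule LIMSEQ_le[OF l1 l2]) (use t(2) in \<open>auto intro: less_imp_le\<close>)
  then show False using my by simp
qed



lemma r1_alg:
  fixes B c d \<sigma> N \<mu> p :: real
  assumes "B \<noteq> 0" "c \<noteq> 0" "d \<noteq> 0" "\<sigma> \<noteq> 0" "N \<noteq> 0"
  shows "\<mu> * N = B / N * (c*d*N/(\<sigma>*B)) * ((\<mu>*N*\<sigma>*B - c*d*(p+\<mu>*N))/(c*d*B)) + (p / N + \<mu>) * (c*d*N/(\<sigma>*B))"
proof -
  have a: "B / N * (c*d*N/(\<sigma>*B)) = c*d/\<sigma>" using assms by (simp add: field_simps)
  have b: "c*d/\<sigma> * ((\<mu>*N*\<sigma>*B - c*d*(p+\<mu>*N))/(c*d*B)) = \<mu>*N - c*d*(p+\<mu>*N)/(\<sigma>*B)"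
    using assms by (simp add: field_simps)
  have e: "(p / N + \<mu>) * (c*d*N/(\<sigma>*B)) = c*d*(p+\<mu>*N)/(\<sigma>*B)" using assms by (simp add: field_simps)
  show ?thesis unfolding a b e by simp
qed

lemma dfe_alg:
  fixes B c d \<sigma> N \<mu> p :: real
  assumes "B > 0" "c > 0" "d > 0" "\<sigma> > 0" "N > 0" "\<mu> > 0" "p > 0"
    and h: "\<mu>*N*\<sigma>*B - c*d*(p+\<mu>*N) \<le> 0"
  shows "\<mu> * N / (p / N + \<mu>) \<le> c * d / (\<sigma> * (B / N))"
proof -
  have l: "\<mu> * N / (p / N + \<mu>) = (\<mu>*N*N) / (p+\<mu>*N)" using assms by (simp add: field_simps)
  have r: "c * d / (\<sigma> * (B / N)) = (c*d*N) / (\<sigma>*B)" using assms by (simp add: field_simps)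
  have pos: "p+\<mu>*N > 0" "\<sigma>*B > 0" using assms by (auto intro: add_pos_pos)
  have "N * (\<mu>*N*\<sigma>*B) \<le> N * (c*d*(p+\<mu>*N))" using h assms by (intro mult_left_mono) auto
  then have "(\<mu>*N*N) * (\<sigma>*B) \<le> (c*d*N) * (p+\<mu>*N)" by (simp add: algebra_simps)
  then have "(\<mu>*N*N) / (p+\<mu>*N) \<le> (c*d*N) / (\<sigma>*B)"
    using pos by (simp add: divide_le_eq le_divide_eq mult.commute mult.left_commute)
  then show ?thesis unfolding l r .
qed

theorem mainTheorem11:
  fixes N \<mu> \<beta> \<sigma> \<gamma> p \<rho> :: real
    and x :: "real \<Rightarrow> real \<times> real \<times> real"
  assumes "N > 0" "\<mu> > 0" "\<beta> > 0" "\<sigma> > 0" "\<gamma> > 0" "p > 0"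
    and "0 < \<rho>" "\<rho> < 1"
    and "x 0 \<in> Omega N"
    and "forward_solution (seir_field N \<mu> \<beta> \<sigma> \<gamma> p \<rho>) x"
    and "omega_limit x \<subseteq> interior (Omega N)"
  shows "closed_orbit (seir_field N \<mu> \<beta> \<sigma> \<gamma> p \<rho>) (omega_limit x) \<or>
         omega_limit x =
           (let Ie = (\<mu> * N * \<sigma> * \<beta> * (1 - \<rho>) - (\<sigma> + \<mu>) * (\<gamma> + \<mu>) * (p + \<mu> * N))
                     / ((\<sigma> + \<mu>) * (\<gamma> + \<mu>) * \<beta> * (1 - \<rho>))
            in {((\<sigma> + \<mu>) * (\<gamma> + \<mu>) * N / (\<sigma> * \<beta> * (1 - \<rho>)),
                 (\<gamma> + \<mu>) / \<sigma> * Ie, Ie)})"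
proof -
  note prm = assms(1-8)
  note fwd = assms(10)
  define S where "S = (\<lambda>t. fst (x t))"
  define E where "E = (\<lambda>t. fst (snd (x t)))"
  define I where "I = (\<lambda>t. snd (snd (x t)))"
  define k where "k = \<beta> * (1 - \<rho>) / N"
  define \<delta> where "\<delta> = p / N + \<mu>"
  have kpos: "k > 0" using prm by (simp add: k_def)
  have dpos: "\<delta> > 0" using prm by (simp add: \<delta>_def add_pos_pos)
  have x0: "S 0 \<ge> 0" "E 0 \<ge> 0" "I 0 \<ge> 0" "S 0 + E 0 + I 0 \<le> N"
    using assms(9) unfolding S_def E_def I_def Omega_def by (auto split: prod.splits)
  interpret L: seir S E I "\<mu> * N" k \<delta> "\<sigma> + \<mu>" "\<gamma> + \<mu>" \<sigma> \<mu> N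
  proof (unfold_locales)
    fix t :: real assume t: "0 \<le> t"
    show "(S has_real_derivative (\<mu> * N - k * S t * I t - \<delta> * S t)) (at t within {0..})"
      unfolding S_def I_def by (rule DERIV_cong[OF comp_derivs(1)[OF fwd t]])
         (use prm in \<open>simp add: k_def \<delta>_def field_simps\<close>)
    show "(E has_real_derivative (k * S t * I t - (\<sigma> + \<mu>) * E t)) (at t within {0..})"
      unfolding S_def E_def I_def by (rule DERIV_cong[OF comp_derivs(2)[OF fwd t]])
         (use prm in \<open>simp add: k_def field_simps\<close>)
    show "(I has_real_derivative (\<sigma> * E t - (\<gamma> + \<mu>) * I t)) (at t within {0..})"
      unfolding E_def I_def by (rule DERIV_cong[OF comp_derivs(3)[OF fwd t]])
         simp
  qed (use prm kpos dpos x0 in \<open>auto simp: \<delta>_def\<close>)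
  have box: "x t \<in> {0..N} \<times> {0..N} \<times> {0..N}" if "0 \<le> t" for t
    using L.bounds[OF that] unfolding S_def E_def I_def by (cases "x t") auto
  obtain \<epsilon> T where eps: "\<epsilon> > 0" "\<And>t. T \<le> t \<Longrightarrow> \<epsilon> \<le> S t \<and> \<epsilon> \<le> E t \<and> \<epsilon> \<le> I t"
    using eventual_pos[OF box assms(11)] unfolding S_def E_def I_def by blast
  define T0 where "T0 = max T 1"
  have T0: "1 \<le> T0" unfolding T0_def by simp
  have epsT0: "\<epsilon> \<le> S t \<and> \<epsilon> \<le> E t \<and> \<epsilon> \<le> I t" if "T0 \<le> t" for t
    using eps(2)[of t] that unfolding T0_def by simp
  define Ie where "Ie = (\<mu> * N * \<sigma> * \<beta> * (1 - \<rho>) - (\<sigma> + \<mu>) * (\<gamma> + \<mu>) * (p + \<mu> * N))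
                     / ((\<sigma> + \<mu>) * (\<gamma> + \<mu>) * \<beta> * (1 - \<rho>))"
  define Sc where "Sc = (\<sigma> + \<mu>) * (\<gamma> + \<mu>) * N / (\<sigma> * \<beta> * (1 - \<rho>))"
  define Ec where "Ec = (\<gamma> + \<mu>) / \<sigma> * Ie"
  have nz: "1 - \<rho> \<noteq> 0" "\<sigma> + \<mu> \<noteq> 0" "\<gamma> + \<mu> \<noteq> 0" "N \<noteq> 0" "\<beta> \<noteq> 0" "\<sigma> \<noteq> 0"
    using prm by auto
  have den: "(\<sigma> + \<mu>) * (\<gamma> + \<mu>) * \<beta> * (1 - \<rho>) > 0" "\<sigma> * \<beta> * (1 - \<rho>) > 0"
    using prm by (auto intro!: mult_pos_pos add_pos_pos)
  define B where "B = \<beta> * (1 - \<rho>)"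
  have Bp: "B > 0" unfolding B_def using prm by simp
  have Sc': "Sc = (\<sigma>+\<mu>)*(\<gamma>+\<mu>)*N/(\<sigma>*B)" unfolding Sc_def B_def by (simp add: mult.assoc)
  have Ie': "Ie = (\<mu>*N*\<sigma>*B - (\<sigma>+\<mu>)*(\<gamma>+\<mu>)*(p+\<mu>*N))/((\<sigma>+\<mu>)*(\<gamma>+\<mu>)*B)"
    unfolding Ie_def B_def by (simp add: mult.assoc)
  have k': "k = B / N" unfolding k_def B_def ..
  show ?thesis
  proof (cases "Ie > 0")
    case True
    have Scp: "Sc > 0" unfolding Sc_def using prm den by (auto intro!: divide_pos_pos mult_pos_pos add_pos_pos)
    have Ecp: "Ec > 0" unfolding Ec_def using prm True by (auto intro!: mult_pos_pos divide_pos_pos add_pos_pos)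
    have r1: "\<mu> * N = k*Sc*Ie + \<delta>*Sc"
      unfolding k' Sc' Ie' \<delta>_def using r1_alg[of B "\<sigma>+\<mu>" "\<gamma>+\<mu>" \<sigma> N \<mu> p] nz Bp by simp
    have r2: "(\<sigma> + \<mu>)*Ec = k*Sc*Ie"
    proof -
      have kSc: "k*Sc = (\<sigma>+\<mu>)*(\<gamma>+\<mu>)/\<sigma>" unfolding k' Sc' using nz Bp by (simp add: field_simps)
      show ?thesis unfolding kSc Ec_def using nz by (simp add: field_simps)
    qed
    have r3: "\<sigma>*Ec = (\<gamma> + \<mu>)*Ie"
      unfolding Ec_def using prm by (simp add: field_simps)
    have lims: "(S \<longlongrightarrow> Sc) at_top" "(I \<longlongrightarrow> Ie) at_top" "(E \<longlongrightarrow> Ec) at_top"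
      using L.case_endemic[OF T0 _ Scp Ecp True r1 r2 r3] epsT0 eps(1) by (meson less_le_trans)+
    have "((\<lambda>t. (S t, E t, I t)) \<longlongrightarrow> (Sc, Ec, Ie)) at_top"
      by (intro tendsto_Pair lims)
    moreover have "(\<lambda>t. (S t, E t, I t)) = x" unfolding S_def E_def I_def by auto
    ultimately have "omega_limit x = {(Sc, Ec, Ie)}" using omega_of_tendsto by metis
    then show ?thesis unfolding Sc_def Ec_def Ie_def Let_def by simp
  next
    case False
    have "\<mu> * N / \<delta> \<le> (\<sigma> + \<mu>) * (\<gamma> + \<mu>) / (\<sigma> * k)"
    proof -
      have "\<mu> * N * \<sigma> * \<beta> * (1 - \<rho>) - (\<sigma> + \<mu>) * (\<gamma> + \<mu>) * (p + \<mu> * N) \<le> 0"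
        using False den unfolding Ie_def by (simp add: divide_le_0_iff not_less)
      moreover have "\<mu> * N * \<sigma> * \<beta> * (1 - \<rho>) = \<mu> * N * \<sigma> * B" unfolding B_def by simp
      ultimately have "\<mu>*N*\<sigma>*B - (\<sigma>+\<mu>)*(\<gamma>+\<mu>)*(p+\<mu>*N) \<le> 0" by simp
      from dfe_alg[OF Bp _ _ _ _ _ _ this] prm show ?thesis unfolding k' \<delta>_def by simp
    qed
    then have False
      using L.case_dfe[OF T0 _ eps(1)] epsT0 eps(1) by (meson less_le_trans)
    then show ?thesis ..
  qed
qed


end
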